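(* Let $G$ be a graph with $n$ vertices. Then $n-\nabla(G)\le \gamma^{DLD}(G)$.
   Context: All graphs are finite, simple and undirected (not necessarily connected). For $u\in V$, $N(u)$ is the set of neighbours of $u$ and $N[u]=N(u)\cup\{u\}$. A code is a non-empty subset $C\subseteq V$; $I(C;u)=N[u]\cap C$. A code $C$ is solid-locating-dominating if $I(C;u)\ne\emptyset$ for every $u\in V\setminus C$ and $I(C;u)\not\subseteq I(C;v)$ for all distinct $u,v\in V\setminus C$; $\gamma^{DLD}(G)$ is the minimum size of such a code. The vicinal preorder $\lesssim$ on $V(G)$ is defined by $x\lesssim y$ iff $N(x)\subseteq N[y]$. A chain is a set $B\subseteq V(G)$ such that any two elements $x,y\in B$ satisfy $x\lesssim y$ or $y\lesssim x$. The Dilworth number $\nabla(G)$ is the minimum number of chains of the vicinal preorder needed to cover $V(G)$ (equivalently, the maximum size of an antichain, i.e. a set $A$ such that $x,y\in A$ and $x\lesssim y$ imply $x=y$). *)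

theory Defs
  imports Main
begin

definition simple_graph :: "'a set \<Rightarrow> ('a \<Rightarrow> 'a \<Rightarrow> bool) \<Rightarrow> bool" where
  "simple_graph V E \<longleftrightarrow> finite V \<and> (\<forall>x y. E x y \<longrightarrow> E y x) \<and> (\<forall>x. \<not> E x x)
     \<and> (\<forall>x y. E x y \<longrightarrow> x \<in> V \<and> y \<in> V)"

definition nbhd :: "'a set \<Rightarrow> ('a \<Rightarrow> 'a \<Rightarrow> bool) \<Rightarrow> 'a \<Rightarrow> 'a set" where
  "nbhd V E u = {v \<in> V. E u v}"

definition closed_nbhd :: "'a set \<Rightarrow> ('a \<Rightarrow> 'a \<Rightarrow> bool) \<Rightarrow> 'a \<Rightarrow> 'a set" where
  "closed_nbhd V E u = insert u (nbhd V E u)"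

definition solid_locating_dominating :: "'a set \<Rightarrow> ('a \<Rightarrow> 'a \<Rightarrow> bool) \<Rightarrow> 'a set \<Rightarrow> bool" where
  "solid_locating_dominating V E C \<longleftrightarrow> C \<noteq> {} \<and> C \<subseteq> V
     \<and> (\<forall>u \<in> V - C. closed_nbhd V E u \<inter> C \<noteq> {})
     \<and> (\<forall>u \<in> V - C. \<forall>v \<in> V - C. u \<noteq> v \<longrightarrow>
           \<not> (closed_nbhd V E u \<inter> C \<subseteq> closed_nbhd V E v \<inter> C))"

definition gamma_DLD :: "'a set \<Rightarrow> ('a \<Rightarrow> 'a \<Rightarrow> bool) \<Rightarrow> nat" where
  "gamma_DLD V E = Inf (card ` {C. solid_locating_dominating V E C})"

definition vicinal_le :: "'a set \<Rightarrow> ('a \<Rightarrow> 'a \<Rightarrow> bool) \<Rightarrow> 'a \<Rightarrow> 'a \<Rightarrow> bool" where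
  "vicinal_le V E x y \<longleftrightarrow> nbhd V E x \<subseteq> closed_nbhd V E y"

definition is_chain :: "'a set \<Rightarrow> ('a \<Rightarrow> 'a \<Rightarrow> bool) \<Rightarrow> 'a set \<Rightarrow> bool" where
  "is_chain V E B \<longleftrightarrow> B \<subseteq> V \<and>
     (\<forall>x \<in> B. \<forall>y \<in> B. vicinal_le V E x y \<or> vicinal_le V E y x)"

definition dilworth_number :: "'a set \<Rightarrow> ('a \<Rightarrow> 'a \<Rightarrow> bool) \<Rightarrow> nat" where
  "dilworth_number V E = Inf {k. \<exists>\<B>. finite \<B> \<and> card \<B> = k
        \<and> (\<forall>B \<in> \<B>. is_chain V E B) \<and> \<Union>\<B> = V}"

end

theory Submission
  imports Defs
begin

lemma antichain_aux:
  assumes sld: "solid_locating_dominating V E C"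
    and u: "u \<in> V - C" and v: "v \<in> V - C" and ne: "u \<noteq> v"
  shows "\<not> vicinal_le V E u v"
proof
  assume le: "vicinal_le V E u v"
  have "closed_nbhd V E u \<inter> C \<subseteq> closed_nbhd V E v \<inter> C"
    using le u unfolding vicinal_le_def closed_nbhd_def by auto
  thus False using sld u v ne unfolding solid_locating_dominating_def by blast
qed

theorem mainTheorem6:
  fixes V :: "'a set" and E :: "'a \<Rightarrow> 'a \<Rightarrow> bool" and n :: nat
  assumes "simple_graph V E" and "card V = n"
  shows "int n - int (dilworth_number V E) \<le> int (gamma_DLD V E)"
proof (cases "V = {}")
  case True
  then show ?thesis using assms by simp
next
  case False
  have fin: "finite V" using assms(1) unfolding simple_graph_def by simp
  let ?S = "{C. solid_locating_dominating V E C}"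
  have "V \<in> ?S" using False unfolding solid_locating_dominating_def by auto
  hence "card ` ?S \<noteq> {}" by blast
  hence "gamma_DLD V E \<in> card ` ?S" unfolding gamma_DLD_def by (rule Inf_nat_def1)
  then obtain C where sld: "solid_locating_dominating V E C" and gC: "gamma_DLD V E = card C"
    by auto
  have CV: "C \<subseteq> V" using sld unfolding solid_locating_dominating_def by simp
  let ?K = "{k. \<exists>\<B>. finite \<B> \<and> card \<B> = k
        \<and> (\<forall>B \<in> \<B>. is_chain V E B) \<and> \<Union>\<B> = V}"
  have "card ((\<lambda>x. {x}) ` V) \<in> ?K"
    using fin unfolding is_chain_def vicinal_le_def closed_nbhd_def by (intro CollectI exI[of _ "(\<lambda>x. {x}) ` V"]) auto
  hence "?K \<noteq> {}" by blast
  hence "dilworth_number V E \<in> ?K" unfolding dilworth_number_def by (rule Inf_nat_def1)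
  then obtain \<B> where Bf: "finite \<B>" and Bc: "card \<B> = dilworth_number V E"
    and ch: "\<forall>B \<in> \<B>. is_chain V E B" and cov: "\<Union>\<B> = V" by auto
  define f where "f x = (SOME B. B \<in> \<B> \<and> x \<in> B)" for x
  have fB: "f x \<in> \<B> \<and> x \<in> f x" if "x \<in> V" for x
    unfolding f_def by (rule someI_ex) (use that cov in auto)
  have "inj_on f (V - C)"
  proof (rule inj_onI)
    fix x y assume x: "x \<in> V - C" and y: "y \<in> V - C" and eq: "f x = f y"
    show "x = y"
    proof (rule ccontr)
      assume ne: "x \<noteq> y"
      have "x \<in> f x" "y \<in> f x" "f x \<in> \<B>" using fB x y eq by auto
      hence "vicinal_le V E x y \<or> vicinal_le V E y x" using ch unfolding is_chain_def by blast
      thus False using antichain_aux[OF sld x y ne] antichain_aux[OF sld y x] ne by auto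
    qed
  qed
  moreover have "f ` (V - C) \<subseteq> \<B>" using fB by auto
  ultimately have "card (V - C) \<le> card \<B>"
    using Bf by (metis card_inj_on_le)
  moreover have "card V = card C + card (V - C)"
    using fin CV by (metis card_Diff_subset card_mono finite_subset le_add_diff_inverse)
  ultimately show ?thesis using assms(2) gC Bc by simp
qed

end
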